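(* Let $\{x^k\}$ be an infinite sequence generated by the MPG algorithm described in the context (i.e., the algorithm never stops), and suppose Assumption (A1) holds. Then $\{x^k\}$ converges to a weakly Pareto optimal point $\bar x$ of the problem $\min_{x\in\mathbb{R}^n}F(x)$.
   Context: Let $F:\mathbb{R}^n\to(\mathbb{R}\cup\{+\infty\})^m$, $F=(F_1,\ldots,F_m)$, with $F_j=G_j+H_j$ for $j=1,\ldots,m$, where: (i) each $G_j:\mathbb{R}^n\to\mathbb{R}$ is continuously differentiable and convex; (ii) each $H_j:\mathbb{R}^n\to\mathbb{R}\cup\{+\infty\}$ is proper, convex and continuous on its domain; (iii) $\mathrm{dom}(F):=\{x: F_j(x)<+\infty\ \forall j\}$ is nonempty and closed. For $u,v\in\mathbb{R}^m$, $u\preceq v$ means $u_j\le v_j$ for all $j$, and $u\prec v$ means $u_j<v_j$ for all $j$. A point $\bar x$ is weakly Pareto optimal if there is no $x\in\mathbb{R}^n$ with $F(x)\prec F(\bar x)$. Assumption (A1): for every sequence $\{y^k\}\subset\mathrm{dom}(F)$ with $F(y^{k+1})\preceq F(y^k)$ for all $k$, there exists $y\in\mathrm{dom}(F)$ with $F(y)\preceq F(y^k)$ for all $k$. For $x\in\mathrm{dom}(F)$ and $\alpha>0$ define $\psi_x(u):=\max_{j=1,\ldots,m}\big(\nabla G_j(x)^\top(u-x)+H_j(u)-H_j(x)\big)$, $p_\alpha(x):=\arg\min_{u\in\mathbb{R}^n}\psi_x(u)+\frac{1}{2\alpha}\|u-x\|^2$ (unique minimizer), and $\theta_\alpha(x):=\psi_x(p_\alpha(x))+\frac{1}{2\alpha}\|p_\alpha(x)-x\|^2$.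 MPG algorithm. Step 0: choose $x^0\in\mathrm{dom}(F)$, $\alpha>0$, $\gamma\in(0,2/\alpha)$, $0<\tau_1<\tau_2<1$; set $k=0$. Step 1: compute $p^k:=p_\alpha(x^k)$ and $\theta_\alpha(x^k)$. Step 2: if $\theta_\alpha(x^k)=0$, stop. Step 3: set $d^k:=p^k-x^k$, take $j_k^*\in\arg\max_{j}\nabla G_j(x^k)^\top d^k$, set $t=1$. Step 3.1: if $G_{j_k^*}(x^k+td^k)\le G_{j_k^*}(x^k)+t\nabla G_{j_k^*}(x^k)^\top d^k+t\frac{\gamma}{2}\|d^k\|^2$, go to Step 3.2; otherwise replace $t$ by some value in $[\tau_1 t,\tau_2 t]$ and repeat Step 3.1. Step 3.2: if $F(x^k+td^k)\preceq F(x^k)$, set $t_k=t$ and go to Step 4. Step 3.3: replace $t$ by some value in $[\tau_1 t,\tau_2 t]$; if $G_j(x^k+td^k)\le G_j(x^k)+t\nabla G_j(x^k)^\top d^k+t\frac{\gamma}{2}\|d^k\|^2$ for all $j=1,\ldots,m$, set $t_k=t$ and go to Step 4; otherwise repeat Step 3.3. Step 4: $x^{k+1}:=x^k+t_kd^k$, $k\leftarrow k+1$, go to Step 1. *)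

theory Defs
  imports "HOL-Analysis.Analysis" "HOL-Library.Extended_Real"
begin

text \<open>Objectives are indexed by j in {..<m}. G j is real valued, H j is extended-real valued
(value \<infinity> allowed). DG j x is the gradient of G j at x.\<close>

definition Fv :: "(nat \<Rightarrow> 'a \<Rightarrow> real) \<Rightarrow> (nat \<Rightarrow> 'a \<Rightarrow> ereal) \<Rightarrow> nat \<Rightarrow> 'a \<Rightarrow> ereal" where
  "Fv G H j x = ereal (G j x) + H j x"

definition domF :: "nat \<Rightarrow> (nat \<Rightarrow> 'a \<Rightarrow> ereal) \<Rightarrow> 'a set" where
  "domF m H = {x. \<forall>j<m. H j x < \<infinity>}"

definition ereal_convex :: "('a::real_vector \<Rightarrow> ereal) \<Rightarrow> bool" where
  "ereal_convex f \<longleftrightarrow> (\<forall>x y t. 0 < t \<and> t < 1 \<longrightarrow>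
      f ((1 - t) *\<^sub>R x + t *\<^sub>R y) \<le> ereal (1 - t) * f x + ereal t * f y)"

definition proper_fun :: "('a \<Rightarrow> ereal) \<Rightarrow> bool" where
  "proper_fun f \<longleftrightarrow> (\<forall>x. f x \<noteq> -\<infinity>) \<and> (\<exists>x. f x \<noteq> \<infinity>)"

definition Fle :: "nat \<Rightarrow> (nat \<Rightarrow> 'a \<Rightarrow> real) \<Rightarrow> (nat \<Rightarrow> 'a \<Rightarrow> ereal) \<Rightarrow> 'a \<Rightarrow> 'a \<Rightarrow> bool" where
  "Fle m G H y x \<longleftrightarrow> (\<forall>j<m. Fv G H j y \<le> Fv G H j x)"

definition weakly_pareto :: "nat \<Rightarrow> (nat \<Rightarrow> 'a \<Rightarrow> real) \<Rightarrow> (nat \<Rightarrow> 'a \<Rightarrow> ereal) \<Rightarrow> 'a \<Rightarrow> bool" where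
  "weakly_pareto m G H xb \<longleftrightarrow> \<not> (\<exists>x. \<forall>j<m. Fv G H j x < Fv G H j xb)"

definition assumption_A1 :: "nat \<Rightarrow> (nat \<Rightarrow> 'a \<Rightarrow> real) \<Rightarrow> (nat \<Rightarrow> 'a \<Rightarrow> ereal) \<Rightarrow> bool" where
  "assumption_A1 m G H \<longleftrightarrow> (\<forall>y :: nat \<Rightarrow> 'a.
      (\<forall>k. y k \<in> domF m H) \<and> (\<forall>k. Fle m G H (y (Suc k)) (y k)) \<longrightarrow>
      (\<exists>z\<in>domF m H. \<forall>k. Fle m G H z (y k)))"

definition psi :: "nat \<Rightarrow> (nat \<Rightarrow> 'a::real_inner \<Rightarrow> 'a) \<Rightarrow> (nat \<Rightarrow> 'a \<Rightarrow> ereal) \<Rightarrow> 'a \<Rightarrow> 'a \<Rightarrow> ereal" where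
  "psi m DG H x u = Max ((\<lambda>j. ereal (DG j x \<bullet> (u - x)) + H j u - H j x) ` {..<m})"

definition phi :: "nat \<Rightarrow> (nat \<Rightarrow> 'a::real_inner \<Rightarrow> 'a) \<Rightarrow> (nat \<Rightarrow> 'a \<Rightarrow> ereal) \<Rightarrow> real \<Rightarrow> 'a \<Rightarrow> 'a \<Rightarrow> ereal" where
  "phi m DG H \<alpha> x u = psi m DG H x u + ereal ((norm (u - x))\<^sup>2 / (2 * \<alpha>))"

definition armijo :: "(nat \<Rightarrow> 'a::real_inner \<Rightarrow> real) \<Rightarrow> (nat \<Rightarrow> 'a \<Rightarrow> 'a) \<Rightarrow> real \<Rightarrow> 'a \<Rightarrow> 'a \<Rightarrow> nat \<Rightarrow> real \<Rightarrow> bool" where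
  "armijo G DG \<gamma> x d j t \<longleftrightarrow>
     G j (x + t *\<^sub>R d) \<le> G j x + t * (DG j x \<bullet> d) + t * (\<gamma> / 2) * (norm d)\<^sup>2"

text \<open>One (non-terminating) iteration of MPG from x to x'. p is p_alpha(x) (the minimizer of phi),
  theta_alpha(x) = phi x p must be nonzero (the algorithm does not stop), ts is the sequence of
  trial step sizes (ts 0 = 1, each next one chosen in [tau1 t, tau2 t]); N1 is the index where
  Step 3.1 terminates, and in the case of Step 3.3 N2 is the index where it terminates.\<close>
definition mpg_step :: "nat \<Rightarrow> (nat \<Rightarrow> 'a::real_inner \<Rightarrow> real) \<Rightarrow> (nat \<Rightarrow> 'a \<Rightarrow> 'a) \<Rightarrow> (nat \<Rightarrow> 'a \<Rightarrow> ereal)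
    \<Rightarrow> real \<Rightarrow> real \<Rightarrow> real \<Rightarrow> real \<Rightarrow> 'a \<Rightarrow> 'a \<Rightarrow> bool" where
  "mpg_step m G DG H \<alpha> \<gamma> \<tau>1 \<tau>2 x x' \<longleftrightarrow>
    (\<exists>p js ts N1 tk.
       is_arg_min (phi m DG H \<alpha> x) (\<lambda>_. True) p \<and>
       phi m DG H \<alpha> x p \<noteq> 0 \<and>
       js < m \<and> (\<forall>i<m. DG i x \<bullet> (p - x) \<le> DG js x \<bullet> (p - x)) \<and>
       ts 0 = 1 \<and> (\<forall>i. \<tau>1 * ts i \<le> ts (Suc i) \<and> ts (Suc i) \<le> \<tau>2 * ts i) \<and>
       armijo G DG \<gamma> x (p - x) js (ts N1) \<and>
       (\<forall>i<N1. \<not> armijo G DG \<gamma> x (p - x) js (ts i)) \<and>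
       ((Fle m G H (x + ts N1 *\<^sub>R (p - x)) x \<and> tk = ts N1) \<or>
        (\<not> Fle m G H (x + ts N1 *\<^sub>R (p - x)) x \<and>
         (\<exists>N2>N1. (\<forall>j<m. armijo G DG \<gamma> x (p - x) j (ts N2)) \<and>
            (\<forall>i. N1 < i \<and> i < N2 \<longrightarrow> \<not> (\<forall>j<m. armijo G DG \<gamma> x (p - x) j (ts i))) \<and>
            tk = ts N2))) \<and>
       x' = x + tk *\<^sub>R (p - x))"

definition mpg_sequence :: "nat \<Rightarrow> (nat \<Rightarrow> 'a::real_inner \<Rightarrow> real) \<Rightarrow> (nat \<Rightarrow> 'a \<Rightarrow> 'a) \<Rightarrow> (nat \<Rightarrow> 'a \<Rightarrow> ereal)
    \<Rightarrow> real \<Rightarrow> real \<Rightarrow> real \<Rightarrow> real \<Rightarrow> (nat \<Rightarrow> 'a) \<Rightarrow> bool" where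
  "mpg_sequence m G DG H \<alpha> \<gamma> \<tau>1 \<tau>2 xs \<longleftrightarrow>
     xs 0 \<in> domF m H \<and> 0 < \<alpha> \<and> 0 < \<gamma> \<and> \<gamma> < 2 / \<alpha> \<and> 0 < \<tau>1 \<and> \<tau>1 < \<tau>2 \<and> \<tau>2 < 1 \<and>
     (\<forall>k. mpg_step m G DG H \<alpha> \<gamma> \<tau>1 \<tau>2 (xs k) (xs (Suc k)))"

end

theory Submission
  imports Defs
begin

lemma grad_ineq:
  fixes f :: "'a::real_inner \<Rightarrow> real"
  assumes d: "(f has_derivative (\<lambda>h. D \<bullet> h)) (at x)" and c: "convex_on UNIV f"
  shows "f x + D \<bullet> (y - x) \<le> f y"
proof -
  define g where "g t = f (x + t *\<^sub>R (y - x))" for t :: real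
  have cg: "convex_on UNIV g"
  proof (rule convex_onI)
    fix t a b :: real assume "0 < t" "t < 1"
    have "x + ((1 - t) * a + t * b) *\<^sub>R (y - x) = (1 - t) *\<^sub>R (x + a *\<^sub>R (y - x)) + t *\<^sub>R (x + b *\<^sub>R (y - x))"
      by (simp add: algebra_simps)
    thus "g ((1 - t) *\<^sub>R a + t *\<^sub>R b) \<le> (1 - t) * g a + t * g b"
      unfolding g_def using convex_onD[OF c, of t] \<open>0 < t\<close> \<open>t < 1\<close> by simp
  qed simp
  have "((\<lambda>t. x + t *\<^sub>R (y - x)) has_derivative (\<lambda>t. t *\<^sub>R (y - x))) (at 0)"
    by (auto intro!: derivative_eq_intros)
  moreover have "(f has_derivative (\<lambda>h. D \<bullet> h)) (at ((\<lambda>t. x + t *\<^sub>R (y - x)) 0))"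
    using d by simp
  ultimately have "(g has_derivative (\<lambda>t. D \<bullet> (t *\<^sub>R (y - x)))) (at 0)"
    unfolding g_def using has_derivative_compose by blast
  hence "(g has_field_derivative (D \<bullet> (y - x))) (at 0 within UNIV)"
    by (simp add: has_field_derivative_def mult.commute[of _ "D \<bullet> (y - x)"])
  from convex_on_imp_above_tangent[OF cg _ _ _ this, of 1]
  have "g 1 - g 0 \<ge> D \<bullet> (y - x)" by simp
  thus ?thesis by (simp add: g_def)
qed

lemma fejer_alg:
  fixes x p z :: "'a::real_inner"
  assumes q: "(x - p) \<bullet> (z - p) \<le> q" and t: "0 < t" "t \<le> 1"
  shows "(norm (x + t *\<^sub>R (p - x) - z))\<^sup>2 \<le> (norm (x - z))\<^sup>2 + 2 * t * q"
proof -
  define a where "a = x - z"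
  define b where "b = p - x"
  have e1: "x + t *\<^sub>R (p - x) - z = a + t *\<^sub>R b" by (simp add: a_def b_def algebra_simps)
  have e2: "(x - p) \<bullet> (z - p) = b \<bullet> a + b \<bullet> b"
  proof -
    have "x - p = - b" "z - p = - (a + b)" by (simp_all add: a_def b_def)
    thus ?thesis by (simp add: inner_diff_right inner_minus_right)
  qed
  have n: "(norm (a + t *\<^sub>R b))\<^sup>2 = a \<bullet> a + 2 * t * (a \<bullet> b) + t\<^sup>2 * (b \<bullet> b)"
    unfolding power2_norm_eq_inner by (simp add: inner_add_left inner_add_right inner_commute power2_eq_square algebra_simps)
  have bb: "0 \<le> b \<bullet> b" by simp
  have "t\<^sup>2 * (b \<bullet> b) \<le> 2 * t * (b \<bullet> b)" using t bb
    by (intro mult_right_mono) (auto simp: power2_eq_square)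
  moreover have "2 * t * (b \<bullet> a + b \<bullet> b) \<le> 2 * t * q" using e2 q t by (intro mult_left_mono) auto
  ultimately have "a \<bullet> a + 2 * t * (a \<bullet> b) + t\<^sup>2 * (b \<bullet> b) \<le> a \<bullet> a + 2 * t * q"
    by (simp add: algebra_simps inner_commute)
  thus ?thesis unfolding e1 n by (simp add: a_def power2_norm_eq_inner)
qed

lemma small_pos:
  fixes A B :: real
  assumes "B \<ge> 0" "\<And>s. 0 < s \<Longrightarrow> s < 1 \<Longrightarrow> 0 \<le> A + s * B"
  shows "0 \<le> A"
proof (rule ccontr)
  assume "\<not> 0 \<le> A"
  define s where "s = min (1/2) (- A / (2 * B + 1))"
  have "0 < - A / (2 * B + 1)" using \<open>\<not> 0 \<le> A\<close> assms(1) by (intro divide_pos_pos) auto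
  hence s0: "0 < s" "s < 1" by (auto simp: s_def)
  have "s * B \<le> (- A / (2 * B + 1)) * B" using s0 assms(1) by (intro mult_right_mono) (auto simp: s_def)
  also have "\<dots> < - A" using \<open>\<not> 0 \<le> A\<close> assms(1) mult_nonpos_nonneg[of A B]
    by (simp add: field_simps)
  finally show False using assms(2)[OF s0] by linarith
qed

definition hR :: "(nat \<Rightarrow> 'a \<Rightarrow> ereal) \<Rightarrow> nat \<Rightarrow> 'a \<Rightarrow> real" where
  "hR H j x = real_of_ereal (H j x)"

definition FR :: "(nat \<Rightarrow> 'a \<Rightarrow> real) \<Rightarrow> (nat \<Rightarrow> 'a \<Rightarrow> ereal) \<Rightarrow> nat \<Rightarrow> 'a \<Rightarrow> real" where
  "FR G H j x = G j x + hR H j x"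

definition termR :: "(nat \<Rightarrow> 'a::real_inner \<Rightarrow> 'a) \<Rightarrow> (nat \<Rightarrow> 'a \<Rightarrow> ereal) \<Rightarrow> 'a \<Rightarrow> 'a \<Rightarrow> nat \<Rightarrow> real" where
  "termR DG H x u j = DG j x \<bullet> (u - x) + hR H j u - hR H j x"

definition psiR :: "nat \<Rightarrow> (nat \<Rightarrow> 'a::real_inner \<Rightarrow> 'a) \<Rightarrow> (nat \<Rightarrow> 'a \<Rightarrow> ereal) \<Rightarrow> 'a \<Rightarrow> 'a \<Rightarrow> real" where
  "psiR m DG H x u = Max (termR DG H x u ` {..<m})"

locale mpgl =
  fixes m :: nat
    and G :: "nat \<Rightarrow> 'a::euclidean_space \<Rightarrow> real"
    and DG :: "nat \<Rightarrow> 'a \<Rightarrow> 'a"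
    and H :: "nat \<Rightarrow> 'a \<Rightarrow> ereal"
    and \<alpha> \<gamma> \<tau>1 \<tau>2 :: real
  assumes m_pos: "0 < m"
    and G_grad: "\<And>j x. j < m \<Longrightarrow> (G j has_derivative (\<lambda>h. DG j x \<bullet> h)) (at x)"
    and G_C1: "\<And>j. j < m \<Longrightarrow> continuous_on UNIV (DG j)"
    and G_convex: "\<And>j. j < m \<Longrightarrow> convex_on UNIV (G j)"
    and H_proper: "\<And>j. j < m \<Longrightarrow> proper_fun (H j)"
    and H_convex: "\<And>j. j < m \<Longrightarrow> ereal_convex (H j)"
    and H_cont: "\<And>j. j < m \<Longrightarrow> continuous_on {x. H j x < \<infinity>} (H j)"
    and dom_closed: "closed (domF m H)"
    and par: "0 < \<alpha>" "0 < \<gamma>" "\<gamma> < 2 / \<alpha>" "0 < \<tau>1" "\<tau>1 < \<tau>2" "\<tau>2 < 1"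
begin

abbreviation "D \<equiv> domF m H"

lemma H_fin: "x \<in> D \<Longrightarrow> j < m \<Longrightarrow> H j x = ereal (hR H j x)"
  using H_proper[of j] unfolding domF_def proper_fun_def hR_def
  by (cases "H j x") auto

lemma Fv_fin: "x \<in> D \<Longrightarrow> j < m \<Longrightarrow> Fv G H j x = ereal (FR G H j x)"
  using H_fin by (simp add: Fv_def FR_def)

lemma Fle_iff: "x \<in> D \<Longrightarrow> y \<in> D \<Longrightarrow> Fle m G H y x \<longleftrightarrow> (\<forall>j<m. FR G H j y \<le> FR G H j x)"
  by (simp add: Fle_def Fv_fin)

lemma psi_fin: "x \<in> D \<Longrightarrow> u \<in> D \<Longrightarrow> psi m DG H x u = ereal (psiR m DG H x u)"
proof -
  assume xu: "x \<in> D" "u \<in> D"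
  have "(\<lambda>j. ereal (DG j x \<bullet> (u - x)) + H j u - H j x) ` {..<m} = ereal ` (termR DG H x u ` {..<m})"
    using xu by (auto simp: H_fin termR_def image_image intro!: image_cong)
  moreover have "ereal (Max (termR DG H x u ` {..<m})) = Max (ereal ` (termR DG H x u ` {..<m}))"
    using m_pos by (intro mono_Max_commute) (auto simp: mono_def)
  ultimately show ?thesis unfolding psi_def psiR_def by simp
qed

lemma psi_inf: "x \<in> D \<Longrightarrow> u \<notin> D \<Longrightarrow> psi m DG H x u = \<infinity>"
proof -
  assume x: "x \<in> D" and u: "u \<notin> D"
  then obtain j where j: "j < m" "H j u = \<infinity>" unfolding domF_def by auto
  have "ereal (DG j x \<bullet> (u - x)) + H j u - H j x = \<infinity>" using j x H_fin by simp
  moreover have "(\<lambda>j. ereal (DG j x \<bullet> (u - x)) + H j u - H j x) j \<in> (\<lambda>j. ereal (DG j x \<bullet> (u - x)) + H j u - H j x) ` {..<m}"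
    using j by blast
  hence "ereal (DG j x \<bullet> (u - x)) + H j u - H j x \<le> psi m DG H x u"
    unfolding psi_def by (intro Max_ge) auto
  ultimately show ?thesis by (simp add: top_unique[where 'a=ereal, unfolded top_ereal_def])
qed

lemma psiR_x: "x \<in> D \<Longrightarrow> psiR m DG H x x = 0"
proof -
  have "termR DG H x x ` {..<m} = {0}" using m_pos by (auto simp: termR_def)
  thus "psiR m DG H x x = 0" by (simp add: psiR_def)
qed

lemma term_le_psiR: "j < m \<Longrightarrow> termR DG H x u j \<le> psiR m DG H x u"
  unfolding psiR_def by (intro Max_ge) auto

lemma psiR_le: "(\<And>j. j < m \<Longrightarrow> termR DG H x u j \<le> c) \<Longrightarrow> psiR m DG H x u \<le> c"
  unfolding psiR_def using m_pos by (subst Max_le_iff) auto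

lemma psiR_lt: "(\<And>j. j < m \<Longrightarrow> termR DG H x u j < c) \<Longrightarrow> psiR m DG H x u < c"
  unfolding psiR_def using m_pos by (subst Max_less_iff) auto

lemma h_conv:
  assumes "x \<in> D" "y \<in> D" "0 \<le> t" "t \<le> 1"
  shows "(1 - t) *\<^sub>R x + t *\<^sub>R y \<in> D \<and> (\<forall>j<m. hR H j ((1 - t) *\<^sub>R x + t *\<^sub>R y) \<le> (1 - t) * hR H j x + t * hR H j y)"
proof (cases "t = 0 \<or> t = 1")
  case True thus ?thesis using assms by auto
next
  case False
  hence t: "0 < t" "t < 1" using assms by auto
  have *: "H j ((1 - t) *\<^sub>R x + t *\<^sub>R y) \<le> ereal ((1 - t) * hR H j x + t * hR H j y)" if "j < m" for j
  proof -
    have "H j ((1 - t) *\<^sub>R x + t *\<^sub>R y) \<le> ereal (1 - t) * H j x + ereal t * H j y"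
      using H_convex[OF that] t unfolding ereal_convex_def by blast
    also have "\<dots> = ereal ((1 - t) * hR H j x + t * hR H j y)"
      using H_fin[OF assms(1) that] H_fin[OF assms(2) that] by simp
    finally show ?thesis .
  qed
  have D: "(1 - t) *\<^sub>R x + t *\<^sub>R y \<in> D"
  proof -
    have "H j ((1 - t) *\<^sub>R x + t *\<^sub>R y) < \<infinity>" if "j < m" for j
      using *[OF that] by (cases "H j ((1 - t) *\<^sub>R x + t *\<^sub>R y)") auto
    thus ?thesis unfolding domF_def by auto
  qed
  show ?thesis using D * H_fin[OF D] by auto
qed

lemma phi_fin: "x \<in> D \<Longrightarrow> u \<in> D \<Longrightarrow> phi m DG H \<alpha> x u = ereal (psiR m DG H x u + (norm (u - x))\<^sup>2 / (2 * \<alpha>))"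
  by (simp add: phi_def psi_fin)

lemma psiR_conv:
  assumes x: "x \<in> D" and p: "p \<in> D" and u: "u \<in> D" and s: "0 \<le> s" "s \<le> 1"
  shows "psiR m DG H x ((1 - s) *\<^sub>R p + s *\<^sub>R u) \<le> (1 - s) * psiR m DG H x p + s * psiR m DG H x u"
proof (rule psiR_le)
  fix j assume j: "j < m"
  let ?w = "(1 - s) *\<^sub>R p + s *\<^sub>R u"
  have hw: "hR H j ?w \<le> (1 - s) * hR H j p + s * hR H j u" using h_conv[OF p u s] j by auto
  have "?w - x = (1 - s) *\<^sub>R (p - x) + s *\<^sub>R (u - x)" by (simp add: algebra_simps)
  hence "DG j x \<bullet> (?w - x) = (1 - s) * (DG j x \<bullet> (p - x)) + s * (DG j x \<bullet> (u - x))"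
    by (simp add: inner_add_right)
  hence "termR DG H x ?w j \<le> (1 - s) * termR DG H x p j + s * termR DG H x u j"
    using hw by (simp add: termR_def algebra_simps)
  also have "\<dots> \<le> (1 - s) * psiR m DG H x p + s * psiR m DG H x u"
    using s term_le_psiR[OF j] by (intro add_mono mult_left_mono) auto
  finally show "termR DG H x ?w j \<le> (1 - s) * psiR m DG H x p + s * psiR m DG H x u" .
qed

lemma prox:
  assumes x: "x \<in> D" and am: "is_arg_min (phi m DG H \<alpha> x) (\<lambda>_. True) p"
  shows "p \<in> D" and "\<And>u. u \<in> D \<Longrightarrow> psiR m DG H x p + (x - p) \<bullet> (u - p) / \<alpha> \<le> psiR m DG H x u"
proof -
  have le: "phi m DG H \<alpha> x p \<le> phi m DG H \<alpha> x w" for w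
    using am unfolding is_arg_min_def by (meson not_le)
  have px: "phi m DG H \<alpha> x x = 0" using phi_fin[OF x x] psiR_x[OF x] by (simp add: zero_ereal_def)
  show p: "p \<in> D"
  proof (rule ccontr)
    assume "p \<notin> D"
    hence "phi m DG H \<alpha> x p = \<infinity>" using psi_inf[OF x] by (simp add: phi_def)
    thus False using le[of x] px by simp
  qed
  fix u assume u: "u \<in> D"
  let ?P = "psiR m DG H x p" and ?U = "psiR m DG H x u"
  let ?A = "?U - ?P + (p - x) \<bullet> (u - p) / \<alpha>" and ?B = "(norm (u - p))\<^sup>2 / (2 * \<alpha>)"
  have "0 \<le> ?A"
  proof (rule small_pos)
    show "0 \<le> ?B" using par by simp
    fix s :: real assume s: "0 < s" "s < 1"
    define w where "w = (1 - s) *\<^sub>R p + s *\<^sub>R u"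
    have w: "w \<in> D" using h_conv[OF p u] s by (simp add: w_def)
    have wx: "w - x = (p - x) + s *\<^sub>R (u - p)" by (simp add: w_def algebra_simps)
    have nw: "(norm (w - x))\<^sup>2 = (norm (p - x))\<^sup>2 + 2 * s * ((p - x) \<bullet> (u - p)) + s\<^sup>2 * (norm (u - p))\<^sup>2"
      unfolding wx power2_norm_eq_inner by (simp add: inner_add_left inner_add_right inner_commute algebra_simps power2_eq_square)
    have "?P + (norm (p - x))\<^sup>2 / (2 * \<alpha>) \<le> psiR m DG H x w + (norm (w - x))\<^sup>2 / (2 * \<alpha>)"
      using le[of w] phi_fin[OF x p] phi_fin[OF x w] by simp
    also have "\<dots> \<le> (1 - s) * ?P + s * ?U + (norm (w - x))\<^sup>2 / (2 * \<alpha>)"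
      using psiR_conv[OF x p u] s by (simp add: w_def)
    moreover have "(norm (w - x))\<^sup>2 / (2 * \<alpha>) = (norm (p - x))\<^sup>2 / (2 * \<alpha>) + (2 * s * ((p - x) \<bullet> (u - p)) + s\<^sup>2 * (norm (u - p))\<^sup>2) / (2 * \<alpha>)"
      unfolding nw by (simp add: add_divide_distrib)
    ultimately have "0 \<le> s * (?U - ?P) + (2 * s * ((p - x) \<bullet> (u - p)) + s\<^sup>2 * (norm (u - p))\<^sup>2) / (2 * \<alpha>)"
      by (simp add: algebra_simps)
    also have "\<dots> = s * (?A + s * ?B)"
      using par by (simp add: field_simps power2_eq_square)
    finally show "0 \<le> ?A + s * ?B" using s by (simp add: zero_le_mult_iff)
  qed
  moreover have "(x - p) \<bullet> (u - p) = - ((p - x) \<bullet> (u - p))" by (simp add: inner_diff_left)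
  ultimately show "?P + (x - p) \<bullet> (u - p) / \<alpha> \<le> ?U" by simp
qed

lemma ts_props:
  assumes "ts 0 = 1" "\<forall>i. \<tau>1 * ts i \<le> ts (Suc i) \<and> ts (Suc i) \<le> \<tau>2 * ts i"
  shows "0 < ts i \<and> ts i \<le> 1"
proof (induction i)
  case 0 thus ?case using assms by simp
next
  case (Suc i)
  have "0 < \<tau>1 * ts i" using Suc par by simp
  moreover have "\<tau>2 * ts i \<le> 1 * 1" using Suc par by (intro mult_mono) auto
  ultimately show ?case using assms(2)[rule_format, of i] by auto
qed

definition "cc = 1 - \<alpha> * \<gamma> / 2"

lemma cc_pos: "0 < cc"
  using par by (simp add: cc_def field_simps)

lemma descent:
  assumes x: "x \<in> D" and p: "p \<in> D"
    and pr: "\<forall>u\<in>D. psiR m DG H x p + (x - p) \<bullet> (u - p) / \<alpha> \<le> psiR m DG H x u"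
    and t: "0 < t" "t \<le> 1" and j: "j < m" and arm: "armijo G DG \<gamma> x (p - x) j t"
  shows "x + t *\<^sub>R (p - x) \<in> D" "FR G H j (x + t *\<^sub>R (p - x)) \<le> FR G H j x - cc * t * (- psiR m DG H x p)"
proof -
  have eq: "x + t *\<^sub>R (p - x) = (1 - t) *\<^sub>R x + t *\<^sub>R p" by (simp add: algebra_simps)
  from h_conv[OF x p] t eq j
  show "x + t *\<^sub>R (p - x) \<in> D" by auto
  from h_conv[OF x p] t eq j
  have hc: "hR H j (x + t *\<^sub>R (p - x)) \<le> (1 - t) * hR H j x + t * hR H j p"
    by auto
  let ?P = "psiR m DG H x p" and ?N = "(norm (p - x))\<^sup>2"
  have "?P + (x - p) \<bullet> (x - p) / \<alpha> \<le> 0" using pr x psiR_x[OF x] by fastforce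
  hence N: "?N \<le> - \<alpha> * ?P" using par
    by (simp add: power2_norm_eq_inner field_simps inner_commute) (smt (verit) inner_commute inner_diff_left inner_diff_right)
  have "FR G H j (x + t *\<^sub>R (p - x)) \<le> G j x + t * (DG j x \<bullet> (p - x)) + t * (\<gamma> / 2) * ?N + ((1 - t) * hR H j x + t * hR H j p)"
    using arm hc unfolding armijo_def FR_def by linarith
  also have "\<dots> = FR G H j x + t * termR DG H x p j + t * (\<gamma> / 2) * ?N"
    by (simp add: FR_def termR_def algebra_simps)
  also have "\<dots> \<le> FR G H j x + t * ?P + t * (\<gamma> / 2) * (- \<alpha> * ?P)"
    using term_le_psiR[OF j] N t par by (intro add_mono mult_left_mono) auto
  also have "\<dots> = FR G H j x - cc * t * (- ?P)" by (simp add: cc_def algebra_simps)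
  finally show "FR G H j (x + t *\<^sub>R (p - x)) \<le> FR G H j x - cc * t * (- psiR m DG H x p)" .
qed

lemma step:
  assumes x: "x \<in> D" and st: "mpg_step m G DG H \<alpha> \<gamma> \<tau>1 \<tau>2 x x'"
  shows "\<exists>p t. p \<in> D \<and> x' = x + t *\<^sub>R (p - x) \<and> 0 < t \<and> t \<le> 1 \<and>
    (\<forall>u\<in>D. psiR m DG H x p + (x - p) \<bullet> (u - p) / \<alpha> \<le> psiR m DG H x u) \<and> x' \<in> D \<and>
    (\<forall>j<m. FR G H j x' \<le> FR G H j x) \<and> (\<exists>j<m. FR G H j x' \<le> FR G H j x - cc * t * (- psiR m DG H x p)) \<and>
    (t = 1 \<or> (\<exists>s j. j < m \<and> 0 < s \<and> s \<le> 1 \<and> \<tau>1 * s \<le> t \<and> \<not> armijo G DG \<gamma> x (p - x) j s))"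
proof -
  from st obtain p js ts N1 tk where am: "is_arg_min (phi m DG H \<alpha> x) (\<lambda>_. True) p"
    and js: "js < m" and ts0: "ts 0 = 1" and tsS: "\<forall>i. \<tau>1 * ts i \<le> ts (Suc i) \<and> ts (Suc i) \<le> \<tau>2 * ts i"
    and arm1: "armijo G DG \<gamma> x (p - x) js (ts N1)"
    and narm1: "\<forall>i<N1. \<not> armijo G DG \<gamma> x (p - x) js (ts i)"
    and cases: "(Fle m G H (x + ts N1 *\<^sub>R (p - x)) x \<and> tk = ts N1) \<or>
        (\<not> Fle m G H (x + ts N1 *\<^sub>R (p - x)) x \<and>
         (\<exists>N2>N1. (\<forall>j<m. armijo G DG \<gamma> x (p - x) j (ts N2)) \<and>
            (\<forall>i. N1 < i \<and> i < N2 \<longrightarrow> \<not> (\<forall>j<m. armijo G DG \<gamma> x (p - x) j (ts i))) \<and>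
            tk = ts N2))"
    and x': "x' = x + tk *\<^sub>R (p - x)"
    unfolding mpg_step_def by blast
  have p: "p \<in> D" using prox[OF x am] by blast
  have pr: "\<And>u. u \<in> D \<Longrightarrow> psiR m DG H x p + (x - p) \<bullet> (u - p) / \<alpha> \<le> psiR m DG H x u"
    using prox[OF x am] by blast
  have tsp: "0 < ts i" "ts i \<le> 1" for i using ts_props[OF ts0 tsS] by auto
  have prb: "\<forall>u\<in>D. psiR m DG H x p + (x - p) \<bullet> (u - p) / \<alpha> \<le> psiR m DG H x u" using pr by blast
  note desc = descent[OF x p prb]
  show ?thesis
  proof (cases "Fle m G H (x + ts N1 *\<^sub>R (p - x)) x")
    case True
    hence tk: "tk = ts N1" using cases by blast
    have x'D: "x' \<in> D" using desc(1)[OF tsp js arm1] x' tk by simp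
    have dec: "\<exists>j<m. FR G H j x' \<le> FR G H j x - cc * tk * (- psiR m DG H x p)"
      using desc(2)[OF tsp js arm1] x' tk js by auto
    have all: "\<forall>j<m. FR G H j x' \<le> FR G H j x" using True Fle_iff[OF x x'D] x' tk by simp
    have bt: "tk = 1 \<or> (\<exists>s j. j < m \<and> 0 < s \<and> s \<le> 1 \<and> \<tau>1 * s \<le> tk \<and> \<not> armijo G DG \<gamma> x (p - x) j s)"
    proof (cases N1)
      case 0 thus ?thesis using tk ts0 by simp
    next
      case (Suc n)
      thus ?thesis using narm1 tk tsS tsp js by (intro disjI2 exI[of _ "ts n"] exI[of _ js]) auto
    qed
    show ?thesis using p x' tsp[of N1] tk pr x'D all dec bt by blast
  next
    case False
    then obtain N2 where N2: "N2 > N1" "\<forall>j<m. armijo G DG \<gamma> x (p - x) j (ts N2)"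
      "\<forall>i. N1 < i \<and> i < N2 \<longrightarrow> \<not> (\<forall>j<m. armijo G DG \<gamma> x (p - x) j (ts i))" "tk = ts N2"
      using cases by blast
    have x'D: "x' \<in> D" using desc(1)[OF tsp js] N2 x' js by simp
    have dec: "\<forall>j<m. FR G H j x' \<le> FR G H j x - cc * tk * (- psiR m DG H x p)"
      using desc(2)[OF tsp] x' N2 by auto
    have nn: "0 \<le> cc * tk * (- psiR m DG H x p)"
    proof -
      have "psiR m DG H x p + (x - p) \<bullet> (x - p) / \<alpha> \<le> 0" using pr[OF x] psiR_x[OF x] by simp
      moreover have "0 \<le> (x - p) \<bullet> (x - p) / \<alpha>" using par by simp
      ultimately have "psiR m DG H x p \<le> 0" by linarith
      thus ?thesis using cc_pos tsp[of N2] N2(4) by (simp add: mult_nonneg_nonpos)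
    qed
    have all: "\<forall>j<m. FR G H j x' \<le> FR G H j x" using dec nn by force
    obtain n where n: "N2 = Suc n" "N1 \<le> n" using N2(1) by (cases N2) auto
    have "\<exists>j<m. \<not> armijo G DG \<gamma> x (p - x) j (ts n)"
    proof (cases "n = N1")
      case True
      show ?thesis
      proof (rule ccontr)
        assume "\<not> ?thesis"
        hence A: "\<forall>j<m. armijo G DG \<gamma> x (p - x) j (ts N1)" using True by blast
        have yD: "x + ts N1 *\<^sub>R (p - x) \<in> D" using desc(1)[OF tsp js] A js by simp
        have "\<forall>j<m. FR G H j (x + ts N1 *\<^sub>R (p - x)) \<le> FR G H j x"
        proof (intro allI impI)
          fix j assume j: "j < m"
          have "FR G H j (x + ts N1 *\<^sub>R (p - x)) \<le> FR G H j x - cc * ts N1 * (- psiR m DG H x p)"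
            using desc(2)[OF tsp j] A j by auto
          moreover have "0 \<le> cc * ts N1 * (- psiR m DG H x p)"
          proof -
            have "psiR m DG H x p + (x - p) \<bullet> (x - p) / \<alpha> \<le> 0" using pr[OF x] psiR_x[OF x] by simp
            moreover have "0 \<le> (x - p) \<bullet> (x - p) / \<alpha>" using par by simp
            ultimately have "psiR m DG H x p \<le> 0" by linarith
            thus ?thesis using cc_pos tsp[of N1] by (simp add: mult_nonneg_nonpos)
          qed
          ultimately show "FR G H j (x + ts N1 *\<^sub>R (p - x)) \<le> FR G H j x" by linarith
        qed
        thus False using False Fle_iff[OF x yD] by simp
      qed
    next
      case False
      thus ?thesis using N2(3) n by auto
    qed
    then obtain j where j: "j < m" "\<not> armijo G DG \<gamma> x (p - x) j (ts n)" by blast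
    have bt: "\<exists>s j. j < m \<and> 0 < s \<and> s \<le> 1 \<and> \<tau>1 * s \<le> tk \<and> \<not> armijo G DG \<gamma> x (p - x) j s"
      using j tsp[of n] tsS n N2(4) by (intro exI[of _ "ts n"] exI[of _ j]) auto
    show ?thesis using p x' tsp[of N2] N2(4) pr x'D all dec bt js by blast
  qed
qed

lemma fail_grad:
  assumes j: "j < m" and s: "0 < s" and na: "\<not> armijo G DG \<gamma> x d j s" and d: "d \<noteq> 0"
  shows "\<gamma> / 2 * norm d < norm (DG j (x + s *\<^sub>R d) - DG j x)"
proof -
  let ?w = "x + s *\<^sub>R d"
  have g: "G j ?w + DG j ?w \<bullet> (x - ?w) \<le> G j x"
    using grad_ineq[OF G_grad[OF j] G_convex[OF j]] .
  have "s * (DG j x \<bullet> d) + s * (\<gamma> / 2) * (norm d)\<^sup>2 < s * (DG j ?w \<bullet> d)"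
    using na g unfolding armijo_def by (simp add: inner_diff_right)
  hence "s * ((\<gamma> / 2) * (norm d)\<^sup>2) < s * ((DG j ?w - DG j x) \<bullet> d)"
    by (simp add: inner_diff_left algebra_simps)
  hence "(\<gamma> / 2) * (norm d)\<^sup>2 < (DG j ?w - DG j x) \<bullet> d" using s by simp
  also have "\<dots> \<le> norm (DG j ?w - DG j x) * norm d" by (rule norm_cauchy_schwarz)
  finally have "(\<gamma> / 2 * norm d) * norm d < norm (DG j ?w - DG j x) * norm d"
    by (simp add: power2_eq_square mult.assoc)
  thus ?thesis using d by simp
qed

lemma hR_tendsto:
  assumes j: "j < m" and g: "(g \<longlongrightarrow> l) F" and l: "l \<in> D" and ev: "eventually (\<lambda>i. g i \<in> D) F"
  shows "((\<lambda>i. hR H j (g i)) \<longlongrightarrow> hR H j l) F"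
proof -
  have "((\<lambda>i. H j (g i)) \<longlongrightarrow> H j l) F"
  proof (rule continuous_on_tendsto_compose[OF H_cont[OF j] g])
    show "l \<in> {x. H j x < \<infinity>}" using l j by (auto simp: domF_def)
    show "\<forall>\<^sub>F x in F. g x \<in> {x. H j x < \<infinity>}" using ev j by (auto simp: domF_def elim: eventually_mono)
  qed
  hence "((\<lambda>i. H j (g i)) \<longlongrightarrow> ereal (hR H j l)) F" using H_fin[OF l j] by simp
  thus ?thesis unfolding hR_def[of H j l, symmetric] hR_def[of H j "g _"] by (rule lim_real_of_ereal)
qed

lemma DG_tendsto:
  assumes j: "j < m" and g: "(g \<longlongrightarrow> l) F"
  shows "((\<lambda>i. DG j (g i)) \<longlongrightarrow> DG j l) F"
  using continuous_on_tendsto_compose[OF G_C1[OF j] g] by simp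

lemma G_tendsto:
  assumes j: "j < m" and g: "(g \<longlongrightarrow> l) F"
  shows "((\<lambda>i. G j (g i)) \<longlongrightarrow> G j l) F"
proof -
  have "continuous_on UNIV (G j)"
    using G_grad[OF j] by (meson continuous_at_imp_continuous_on has_derivative_continuous)
  from continuous_on_tendsto_compose[OF this g] show ?thesis by simp
qed

lemma FR_tendsto:
  assumes j: "j < m" and g: "(g \<longlongrightarrow> l) F" and l: "l \<in> D" and ev: "eventually (\<lambda>i. g i \<in> D) F"
  shows "((\<lambda>i. FR G H j (g i)) \<longlongrightarrow> FR G H j l) F"
  unfolding FR_def by (intro tendsto_add G_tendsto hR_tendsto assms)

lemma main:
  assumes A1: "assumption_A1 m G H" and x0: "xs 0 \<in> D"
    and steps: "\<forall>k. mpg_step m G DG H \<alpha> \<gamma> \<tau>1 \<tau>2 (xs k) (xs (Suc k))"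
  shows "\<exists>xb. xs \<longlonglongrightarrow> xb \<and> weakly_pareto m G H xb"
proof -
  have xsD: "xs k \<in> D" for k
  proof (induction k)
    case 0 thus ?case using x0 .
  next
    case (Suc k)
    have "\<exists>p t. p \<in> D \<and> xs (Suc k) = xs k + t *\<^sub>R (p - xs k) \<and> 0 < t \<and> t \<le> 1 \<and>
    (\<forall>u\<in>D. psiR m DG H (xs k) p + (xs k - p) \<bullet> (u - p) / \<alpha> \<le> psiR m DG H (xs k) u) \<and> xs (Suc k) \<in> D \<and>
    (\<forall>j<m. FR G H j (xs (Suc k)) \<le> FR G H j (xs k)) \<and> (\<exists>j<m. FR G H j (xs (Suc k)) \<le> FR G H j (xs k) - cc * t * (- psiR m DG H (xs k) p)) \<and>
    (t = 1 \<or> (\<exists>s j. j < m \<and> 0 < s \<and> s \<le> 1 \<and> \<tau>1 * s \<le> t \<and> \<not> armijo G DG \<gamma> (xs k) (p - xs k) j s))"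
      by (rule step[OF Suc steps[rule_format]])
    thus ?case by (elim exE conjE)
  qed
  define Q where "Q k p t \<longleftrightarrow> p \<in> D \<and> xs (Suc k) = xs k + t *\<^sub>R (p - xs k) \<and> 0 < t \<and> t \<le> 1 \<and>
    (\<forall>u\<in>D. psiR m DG H (xs k) p + (xs k - p) \<bullet> (u - p) / \<alpha> \<le> psiR m DG H (xs k) u) \<and> xs (Suc k) \<in> D \<and>
    (\<forall>j<m. FR G H j (xs (Suc k)) \<le> FR G H j (xs k)) \<and> (\<exists>j<m. FR G H j (xs (Suc k)) \<le> FR G H j (xs k) - cc * t * (- psiR m DG H (xs k) p)) \<and>
    (t = 1 \<or> (\<exists>s j. j < m \<and> 0 < s \<and> s \<le> 1 \<and> \<tau>1 * s \<le> t \<and> \<not> armijo G DG \<gamma> (xs k) (p - xs k) j s))" for k p t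
  have "\<forall>k. \<exists>pt. Q k (fst pt) (snd pt)"
  proof
    fix k
    have "\<exists>p t. Q k p t" unfolding Q_def by (rule step[OF xsD steps[rule_format]])
    then obtain p t where "Q k p t" by blast
    thus "\<exists>pt. Q k (fst pt) (snd pt)" by (intro exI[of _ "(p, t)"]) simp
  qed
  from choice[OF this] obtain f where f: "\<And>k. Q k (fst (f k)) (snd (f k))" by blast
  define P where "P k = fst (f k)" for k
  define T where "T k = snd (f k)" for k
  have PT: "\<And>k. P k \<in> D" "\<And>k. xs (Suc k) = xs k + T k *\<^sub>R (P k - xs k)"
    "\<And>k. 0 < T k" "\<And>k. T k \<le> 1"
    "\<And>k. \<forall>u\<in>D. psiR m DG H (xs k) (P k) + (xs k - P k) \<bullet> (u - P k) / \<alpha> \<le> psiR m DG H (xs k) u"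
    "\<And>k. \<forall>j<m. FR G H j (xs (Suc k)) \<le> FR G H j (xs k)"
    "\<And>k. \<exists>j<m. FR G H j (xs (Suc k)) \<le> FR G H j (xs k) - cc * T k * (- psiR m DG H (xs k) (P k))"
    "\<And>k. T k = 1 \<or> (\<exists>s j. j < m \<and> 0 < s \<and> s \<le> 1 \<and> \<tau>1 * s \<le> T k \<and> \<not> armijo G DG \<gamma> (xs k) (P k - xs k) j s)"
    using f unfolding Q_def P_def T_def by blast+
  define e where "e k = - psiR m DG H (xs k) (P k)" for k
  define d where "d k = P k - xs k" for k
  have Nd: "(norm (d k))\<^sup>2 \<le> \<alpha> * e k" for k
  proof -
    have "psiR m DG H (xs k) (P k) + (xs k - P k) \<bullet> (xs k - P k) / \<alpha> \<le> 0"
      using bspec[OF PT(5)[of k] xsD[of k]] psiR_x[OF xsD[of k]] by simp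
    hence "(xs k - P k) \<bullet> (xs k - P k) / \<alpha> \<le> e k" by (simp add: e_def)
    hence "(xs k - P k) \<bullet> (xs k - P k) \<le> \<alpha> * e k" using par by (simp add: field_simps)
    moreover have "(xs k - P k) \<bullet> (xs k - P k) = (norm (d k))\<^sup>2"
      by (simp add: d_def power2_norm_eq_inner[symmetric] norm_minus_commute)
    ultimately show ?thesis by simp
  qed
  have e0: "0 \<le> e k" for k
  proof -
    have "0 \<le> \<alpha> * e k" using Nd[of k] zero_le_power2[of "norm (d k)"] by linarith
    thus ?thesis using par by (simp add: zero_le_mult_iff)
  qed
  have te0: "0 \<le> T k * e k" for k using e0 PT(3)[of k] by simp
  define S where "S k = (\<Sum>j<m. FR G H j (xs k))" for k
  have Sdec: "S (Suc k) \<le> S k - cc * (T k * e k)" for k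
  proof -
    obtain j0 where j0: "j0 < m" "FR G H j0 (xs (Suc k)) \<le> FR G H j0 (xs k) - cc * T k * e k"
      using PT(7)[of k] by (auto simp: e_def)
    have "S (Suc k) = FR G H j0 (xs (Suc k)) + (\<Sum>j\<in>{..<m} - {j0}. FR G H j (xs (Suc k)))"
      unfolding S_def using j0 by (subst sum.remove[of _ j0]) auto
    also have "\<dots> \<le> (FR G H j0 (xs k) - cc * T k * e k) + (\<Sum>j\<in>{..<m} - {j0}. FR G H j (xs k))"
      using j0 PT(6)[of k] by (intro add_mono sum_mono) auto
    also have "\<dots> = S k - cc * (T k * e k)"
      unfolding S_def using j0 by (subst (2) sum.remove[of _ j0]) auto
    finally show ?thesis .
  qed
  have Fle_seq: "Fle m G H (xs (Suc k)) (xs k)" for k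
    using Fle_iff[OF xsD xsD] PT(6) by simp
  have "\<exists>z\<in>D. \<forall>k. Fle m G H z (xs k)"
    using A1 xsD Fle_seq unfolding assumption_A1_def by simp
  then obtain z where zD: "z \<in> D" and zle: "\<And>k. Fle m G H z (xs k)" by blast
  have zle': "FR G H j z \<le> FR G H j (xs k)" if "j < m" for j k
    using zle[of k] Fle_iff[OF xsD zD] that by simp
  have Sz: "(\<Sum>j<m. FR G H j z) \<le> S k" for k
    unfolding S_def by (intro sum_mono zle') auto
  have tele: "cc * (\<Sum>k<n. T k * e k) \<le> S 0 - S n" for n
  proof (induction n)
    case 0 thus ?case by simp
  next
    case (Suc n) thus ?case using Sdec[of n] by (simp add: algebra_simps)
  qed
  have sumte: "summable (\<lambda>k. T k * e k)"
  proof (rule summableI_nonneg_bounded[OF te0])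
    fix n
    have "cc * (\<Sum>k<n. T k * e k) \<le> S 0 - (\<Sum>j<m. FR G H j z)" using tele[of n] Sz[of n] by linarith
    thus "(\<Sum>k<n. T k * e k) \<le> (S 0 - (\<Sum>j<m. FR G H j z)) / cc" using cc_pos by (simp add: field_simps)
  qed
  define eps where "eps k = 2 * \<alpha> * (T k * e k)" for k
  have eps0: "0 \<le> eps k" for k using te0[of k] par by (simp add: eps_def)
  have sumeps: "summable eps" unfolding eps_def by (intro summable_mult sumte)
  have fejer: "(norm (xs (Suc k) - w))\<^sup>2 \<le> (norm (xs k - w))\<^sup>2 + eps k"
    if wD: "w \<in> D" and wle: "\<And>j k. j < m \<Longrightarrow> FR G H j w \<le> FR G H j (xs k)" for w k
  proof -
    have "psiR m DG H (xs k) w \<le> 0"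
    proof (rule psiR_le)
      fix j assume j: "j < m"
      have "G j (xs k) + DG j (xs k) \<bullet> (w - xs k) \<le> G j w"
        using grad_ineq[OF G_grad[OF j] G_convex[OF j]] .
      thus "termR DG H (xs k) w j \<le> 0" using wle[OF j, of k] by (simp add: termR_def FR_def)
    qed
    hence "(xs k - P k) \<bullet> (w - P k) / \<alpha> \<le> e k" using bspec[OF PT(5)[of k] wD] by (simp add: e_def)
    hence q: "(xs k - P k) \<bullet> (w - P k) \<le> \<alpha> * e k" using par by (simp add: field_simps)
    have "(norm (xs (Suc k) - w))\<^sup>2 \<le> (norm (xs k - w))\<^sup>2 + 2 * T k * (\<alpha> * e k)"
      unfolding PT(2) by (rule fejer_alg[OF q PT(3) PT(4)])
    thus ?thesis by (simp add: eps_def algebra_simps)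
  qed
  have zle2: "\<And>j k. j < m \<Longrightarrow> FR G H j z \<le> FR G H j (xs k)" using zle' by blast
  have bnd: "(norm (xs k - z))\<^sup>2 \<le> (norm (xs 0 - z))\<^sup>2 + (\<Sum>l<k. eps l)" for k
  proof (induction k)
    case 0 thus ?case by simp
  next
    case (Suc k) thus ?case using fejer[OF zD zle2, of k] by simp
  qed
  have bnd2: "norm (xs k) \<le> norm z + sqrt ((norm (xs 0 - z))\<^sup>2 + suminf eps)" for k
  proof -
    have "(\<Sum>l<k. eps l) \<le> suminf eps" using sumeps eps0 by (intro sum_le_suminf) auto
    hence "(norm (xs k - z))\<^sup>2 \<le> (norm (xs 0 - z))\<^sup>2 + suminf eps" using bnd[of k] by simp
    hence "norm (xs k - z) \<le> sqrt ((norm (xs 0 - z))\<^sup>2 + suminf eps)" by (rule real_le_rsqrt)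
    moreover have "norm (xs k) \<le> norm z + norm (xs k - z)" by (metis norm_triangle_sub add.commute)
    ultimately show ?thesis by linarith
  qed
  have "bounded (range xs)" unfolding bounded_iff
    by (intro exI[of _ "norm z + sqrt ((norm (xs 0 - z))\<^sup>2 + suminf eps)"]) (auto intro: bnd2)
  from bounded_imp_convergent_subsequence[OF this] obtain xb r where r: "strict_mono r" and lim_r: "(xs \<circ> r) \<longlonglongrightarrow> xb"
    by blast
  have xbD: "xb \<in> D" using closed_sequentially[OF dom_closed _ lim_r] xsD by simp
  have FRmono: "FR G H j (xs n) \<le> FR G H j (xs k)" if "j < m" "k \<le> n" for j k n
    using that(2)
  proof (induction n)
    case 0 thus ?case by simp
  next
    case (Suc n)
    show ?case
    proof (cases "k = Suc n")
      case True thus ?thesis by simp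
    next
      case False
      hence "k \<le> n" using Suc.prems by simp
      hence "FR G H j (xs n) \<le> FR G H j (xs k)" by (rule Suc.IH)
      moreover have "FR G H j (xs (Suc n)) \<le> FR G H j (xs n)" using PT(6)[of n] that(1) by blast
      ultimately show ?thesis by linarith
    qed
  qed
  have xble: "FR G H j xb \<le> FR G H j (xs k)" if j: "j < m" for j k
  proof -
    have "((\<lambda>i. FR G H j ((xs \<circ> r) i)) \<longlongrightarrow> FR G H j xb) sequentially"
      using FR_tendsto[OF j lim_r xbD] xsD by simp
    moreover have "\<forall>i\<ge>k. FR G H j ((xs \<circ> r) i) \<le> FR G H j (xs k)"
    proof (intro allI impI)
      fix i assume "k \<le> i"
      hence "k \<le> r i" using seq_suble[OF r, of i] by linarith
      thus "FR G H j ((xs \<circ> r) i) \<le> FR G H j (xs k)" using FRmono[OF j] by simp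
    qed
    ultimately show ?thesis by (rule Lim_bounded)
  qed
  define a where "a k = (norm (xs k - xb))\<^sup>2" for k
  define b where "b k = a k + (suminf eps - (\<Sum>l<k. eps l))" for k
  have a0: "0 \<le> a k" for k by (simp add: a_def)
  have tail0: "0 \<le> suminf eps - (\<Sum>l<k. eps l)" for k
    using sum_le_suminf[OF sumeps, of "{..<k}"] eps0 by auto
  have bdec: "decseq b"
  proof (rule decseq_SucI)
    fix k show "b (Suc k) \<le> b k"
      using fejer[OF xbD xble, of k] by (simp add: b_def a_def)
  qed
  have b0: "0 \<le> b k" for k using a0[of k] tail0[of k] by (simp add: b_def)
  have tl: "(\<lambda>k. suminf eps - (\<Sum>l<k. eps l)) \<longlonglongrightarrow> 0"
    using tendsto_diff[OF tendsto_const summable_LIMSEQ[OF sumeps], of "suminf eps"] by simp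
  have "(\<lambda>i. xs (r i) - xb) \<longlonglongrightarrow> 0" using lim_r by (simp add: o_def LIM_zero)
  hence "(\<lambda>i. norm (xs (r i) - xb)) \<longlonglongrightarrow> 0" by (simp add: tendsto_norm_zero_iff)
  hence "(\<lambda>i. (norm (xs (r i) - xb))\<^sup>2) \<longlonglongrightarrow> 0\<^sup>2" by (rule tendsto_power)
  hence "(\<lambda>i. a (r i)) \<longlonglongrightarrow> 0" by (simp add: a_def)
  hence "(b \<circ> r) \<longlonglongrightarrow> 0" using tendsto_add[OF _ LIMSEQ_subseq_LIMSEQ[OF tl r]]
    by (simp add: b_def o_def)
  moreover obtain L where bL: "b \<longlonglongrightarrow> L" using decseq_convergent[OF bdec, of 0] b0 by blast
  ultimately have "L = 0" using LIMSEQ_subseq_LIMSEQ[OF bL r] LIMSEQ_unique by blast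
  hence "b \<longlonglongrightarrow> 0" using bL by simp
  moreover have "\<forall>\<^sub>F k in sequentially. 0 \<le> a k" using a0 by simp
  moreover have "\<forall>\<^sub>F k in sequentially. a k \<le> b k" using tail0 by (simp add: b_def)
  ultimately have "a \<longlonglongrightarrow> 0" using real_tendsto_sandwich[of "\<lambda>_. 0" a sequentially b 0] by simp
  hence "(\<lambda>k. sqrt (a k)) \<longlonglongrightarrow> sqrt 0" by (rule tendsto_real_sqrt)
  hence "(\<lambda>k. norm (xs k - xb)) \<longlonglongrightarrow> 0" by (simp add: a_def)
  hence conv: "xs \<longlonglongrightarrow> xb" by (simp add: tendsto_norm_zero_iff LIM_zero_iff)
  have smallD: "\<exists>k\<ge>K. norm (d k) < \<delta>" if \<delta>: "0 < \<delta>" for \<delta> K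
  proof (rule ccontr)
    assume "\<not> ?thesis"
    hence dK: "\<And>k. K \<le> k \<Longrightarrow> \<delta> \<le> norm (d k)" by (meson not_le)
    have te_lim: "(\<lambda>k. T k * e k) \<longlonglongrightarrow> 0" by (rule summable_LIMSEQ_zero[OF sumte])
    have Tle: "T k \<le> (\<alpha> / \<delta>\<^sup>2) * (T k * e k)" if "K \<le> k" for k
    proof -
      have "\<delta>\<^sup>2 \<le> (norm (d k))\<^sup>2" using dK[OF that] \<delta> by (intro power_mono) auto
      hence "\<delta>\<^sup>2 \<le> \<alpha> * e k" using Nd[of k] by linarith
      hence "T k * \<delta>\<^sup>2 \<le> T k * (\<alpha> * e k)" using PT(3)[of k] by (intro mult_left_mono) auto
      thus ?thesis using \<delta> by (simp add: field_simps)
    qed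
    have "(\<lambda>k. (\<alpha> / \<delta>\<^sup>2) * (T k * e k)) \<longlonglongrightarrow> 0"
      by (rule tendsto_mult_right_zero[OF te_lim])
    moreover have "\<forall>\<^sub>F k in sequentially. 0 \<le> T k" using PT(3) by (simp add: less_imp_le)
    moreover have "\<forall>\<^sub>F k in sequentially. T k \<le> (\<alpha> / \<delta>\<^sup>2) * (T k * e k)"
      using Tle eventually_sequentially by blast
    ultimately have T_lim: "T \<longlonglongrightarrow> 0" using real_tendsto_sandwich[of "\<lambda>_. 0" T sequentially] by auto
    have evT: "\<forall>\<^sub>F k in sequentially. T k < 1" using order_tendstoD(2)[OF T_lim] by simp
    have "\<forall>k. \<exists>sj. T k < 1 \<longrightarrow> (snd sj < m \<and> 0 < fst sj \<and> fst sj \<le> 1 \<and> \<tau>1 * fst sj \<le> T k \<and>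
        \<not> armijo G DG \<gamma> (xs k) (d k) (snd sj) (fst sj))"
    proof
      fix k
      show "\<exists>sj. T k < 1 \<longrightarrow> (snd sj < m \<and> 0 < fst sj \<and> fst sj \<le> 1 \<and> \<tau>1 * fst sj \<le> T k \<and>
        \<not> armijo G DG \<gamma> (xs k) (d k) (snd sj) (fst sj))"
      proof (cases "T k < 1")
        case True
        then obtain s j where "j < m" "0 < s" "s \<le> 1" "\<tau>1 * s \<le> T k" "\<not> armijo G DG \<gamma> (xs k) (d k) j s"
          using PT(8)[of k] unfolding d_def by auto
        thus ?thesis by (intro exI[of _ "(s, j)"]) simp
      qed simp
    qed
    from choice[OF this] obtain g where g: "\<And>k. T k < 1 \<Longrightarrow> snd (g k) < m \<and> 0 < fst (g k) \<and> fst (g k) \<le> 1 \<and>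
        \<tau>1 * fst (g k) \<le> T k \<and> \<not> armijo G DG \<gamma> (xs k) (d k) (snd (g k)) (fst (g k))" by blast
    define sk where "sk k = fst (g k)" for k
    define jk where "jk k = snd (g k)" for k
    have sdb: "norm (sk k *\<^sub>R d k) \<le> sqrt ((\<alpha> / \<tau>1) * (T k * e k))" if "T k < 1" for k
    proof -
      note gk = g[OF that, folded sk_def jk_def]
      have "(norm (sk k *\<^sub>R d k))\<^sup>2 = (sk k)\<^sup>2 * (norm (d k))\<^sup>2" using gk by (simp add: power_mult_distrib)
      also have "\<dots> \<le> sk k * (norm (d k))\<^sup>2" using gk by (intro mult_right_mono) (auto simp: power2_eq_square)
      also have "\<dots> \<le> sk k * (\<alpha> * e k)" using gk Nd[of k] by (intro mult_left_mono) auto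
      also have "\<dots> \<le> (T k / \<tau>1) * (\<alpha> * e k)"
        using gk par e0[of k] by (intro mult_right_mono) (auto simp: field_simps)
      also have "\<dots> = (\<alpha> / \<tau>1) * (T k * e k)" by simp
      finally show ?thesis by (rule real_le_rsqrt)
    qed
    have "(\<lambda>k. sqrt ((\<alpha> / \<tau>1) * (T k * e k))) \<longlonglongrightarrow> sqrt ((\<alpha> / \<tau>1) * 0)"
      by (intro tendsto_real_sqrt tendsto_mult tendsto_const te_lim)
    hence "(\<lambda>k. sqrt ((\<alpha> / \<tau>1) * (T k * e k))) \<longlonglongrightarrow> 0" by simp
    moreover have "\<forall>\<^sub>F k in sequentially. norm (sk k *\<^sub>R d k) \<le> sqrt ((\<alpha> / \<tau>1) * (T k * e k))"
      using evT by (rule eventually_mono) (rule sdb)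
    ultimately have "(\<lambda>k. norm (sk k *\<^sub>R d k)) \<longlonglongrightarrow> 0"
      using real_tendsto_sandwich[of "\<lambda>_. 0" "\<lambda>k. norm (sk k *\<^sub>R d k)" sequentially] by auto
    hence "(\<lambda>k. sk k *\<^sub>R d k) \<longlonglongrightarrow> 0" by (simp only: tendsto_norm_zero_iff)
    hence wlim: "(\<lambda>k. xs k + sk k *\<^sub>R d k) \<longlonglongrightarrow> xb" using tendsto_add[OF conv] by fastforce
    have gd: "\<gamma> * \<delta> / 2 > 0" using par \<delta> by simp
    have "\<forall>j\<in>{..<m}. \<forall>\<^sub>F k in sequentially. norm (DG j (xs k + sk k *\<^sub>R d k) - DG j (xs k)) < \<gamma> * \<delta> / 2"
    proof
      fix j assume "j \<in> {..<m}"
      hence j: "j < m" by simp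
      have "(\<lambda>k. norm (DG j (xs k + sk k *\<^sub>R d k) - DG j (xs k))) \<longlonglongrightarrow> norm (DG j xb - DG j xb)"
        by (intro tendsto_norm tendsto_diff DG_tendsto[OF j] wlim conv)
      thus "\<forall>\<^sub>F k in sequentially. norm (DG j (xs k + sk k *\<^sub>R d k) - DG j (xs k)) < \<gamma> * \<delta> / 2"
        using order_tendstoD(2)[OF _ gd] by simp
    qed
    hence "\<forall>\<^sub>F k in sequentially. \<forall>j\<in>{..<m}. norm (DG j (xs k + sk k *\<^sub>R d k) - DG j (xs k)) < \<gamma> * \<delta> / 2"
      by (intro eventually_ball_finite) auto
    moreover note evT
    moreover have "\<forall>\<^sub>F k in sequentially. K \<le> k" by (simp add: eventually_ge_at_top)
    ultimately have "\<forall>\<^sub>F k in sequentially. (\<forall>j\<in>{..<m}. norm (DG j (xs k + sk k *\<^sub>R d k) - DG j (xs k)) < \<gamma> * \<delta> / 2) \<and> T k < 1 \<and> K \<le> k"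
      by (simp only: eventually_conj_iff)
    then obtain k where k: "\<forall>j\<in>{..<m}. norm (DG j (xs k + sk k *\<^sub>R d k) - DG j (xs k)) < \<gamma> * \<delta> / 2" "T k < 1" "K \<le> k"
      by (auto simp: eventually_sequentially)
    note gk = g[OF k(2), folded sk_def jk_def]
    have dk: "\<delta> \<le> norm (d k)" using dK[OF k(3)] .
    hence "d k \<noteq> 0" using \<delta> by auto
    from fail_grad[of "jk k" "sk k" "xs k" "d k", OF _ _ _ this] gk
    have "\<gamma> / 2 * norm (d k) < norm (DG (jk k) (xs k + sk k *\<^sub>R d k) - DG (jk k) (xs k))" by blast
    moreover have "\<gamma> / 2 * \<delta> \<le> \<gamma> / 2 * norm (d k)" using dk par by (intro mult_left_mono) auto
    moreover have "norm (DG (jk k) (xs k + sk k *\<^sub>R d k) - DG (jk k) (xs k)) < \<gamma> * \<delta> / 2"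
      using k(1) gk by simp
    ultimately show False by simp
  qed
  have "\<exists>fs. \<forall>n. norm (d (fs n)) < inverse (real (Suc n)) \<and> fs n < fs (Suc n)"
  proof (rule dependent_nat_choice)
    show "\<exists>k. norm (d k) < inverse (real (Suc 0))" using smallD[of 1 0] by auto
  next
    fix k n assume "norm (d k) < inverse (real (Suc n))"
    obtain k' where "k' \<ge> Suc k" "norm (d k') < inverse (real (Suc (Suc n)))"
      using smallD[of "inverse (real (Suc (Suc n)))" "Suc k"] by auto
    thus "\<exists>k'. norm (d k') < inverse (real (Suc (Suc n))) \<and> k < k'" by auto
  qed
  then obtain fs where fs: "\<And>n. norm (d (fs n)) < inverse (real (Suc n))" "\<And>n. fs n < fs (Suc n)" by blast
  have fsm: "strict_mono fs" using fs(2) by (simp add: strict_mono_Suc_iff)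
  have "(\<lambda>n. norm (d (fs n))) \<longlonglongrightarrow> 0"
    using real_tendsto_sandwich[of "\<lambda>_. 0" "\<lambda>n. norm (d (fs n))" sequentially "\<lambda>n. inverse (real (Suc n))" 0]
      LIMSEQ_inverse_real_of_nat fs(1) by (simp add: less_imp_le)
  hence dlim: "(\<lambda>n. d (fs n)) \<longlonglongrightarrow> 0" by (simp only: tendsto_norm_zero_iff)
  have Xlim: "(\<lambda>n. xs (fs n)) \<longlonglongrightarrow> xb" using LIMSEQ_subseq_LIMSEQ[OF conv fsm] by (simp add: o_def)
  have Plim: "(\<lambda>n. P (fs n)) \<longlonglongrightarrow> xb"
  proof -
    have "(\<lambda>n. xs (fs n) + d (fs n)) \<longlonglongrightarrow> xb + 0" by (intro tendsto_add Xlim dlim)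
    thus ?thesis by (simp add: d_def)
  qed
  have "weakly_pareto m G H xb"
    unfolding weakly_pareto_def
  proof
    assume "\<exists>y. \<forall>j<m. Fv G H j y < Fv G H j xb"
    then obtain y where y: "\<And>j. j < m \<Longrightarrow> Fv G H j y < Fv G H j xb" by blast
    have yD: "y \<in> D" unfolding domF_def
    proof (intro CollectI allI impI)
      fix j assume j: "j < m"
      show "H j y < \<infinity>"
      proof (rule ccontr)
        assume "\<not> H j y < \<infinity>"
        hence "H j y = \<infinity>" by simp
        hence "Fv G H j y = \<infinity>" by (simp add: Fv_def)
        thus False using y[OF j] by simp
      qed
    qed
    have FRy: "FR G H j y < FR G H j xb" if j: "j < m" for j
      using y[OF j] Fv_fin[OF yD j] Fv_fin[OF xbD j] by simp
    define \<eta> where "\<eta> = - psiR m DG H xb y"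
    have "psiR m DG H xb y < 0"
    proof (rule psiR_lt)
      fix j assume j: "j < m"
      have "G j xb + DG j xb \<bullet> (y - xb) \<le> G j y" using grad_ineq[OF G_grad[OF j] G_convex[OF j]] .
      thus "termR DG H xb y j < 0" using FRy[OF j] by (simp add: termR_def FR_def)
    qed
    hence eta: "0 < \<eta>" by (simp add: \<eta>_def)
    have "\<forall>j\<in>{..<m}. \<forall>\<^sub>F n in sequentially. termR DG H (xs (fs n)) y j < - \<eta> / 2"
    proof
      fix j assume "j \<in> {..<m}"
      hence j: "j < m" by simp
      have "(\<lambda>n. termR DG H (xs (fs n)) y j) \<longlonglongrightarrow> termR DG H xb y j"
        unfolding termR_def
        by (intro tendsto_diff tendsto_add tendsto_inner DG_tendsto[OF j] Xlim tendsto_const hR_tendsto[OF j] xbD)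
          (auto simp: xsD)
      moreover have "termR DG H xb y j < - \<eta> / 2" using term_le_psiR[OF j, of xb y] eta by (simp add: \<eta>_def)
      ultimately show "\<forall>\<^sub>F n in sequentially. termR DG H (xs (fs n)) y j < - \<eta> / 2"
        by (rule order_tendstoD(2))
    qed
    hence "\<forall>\<^sub>F n in sequentially. \<forall>j\<in>{..<m}. termR DG H (xs (fs n)) y j < - \<eta> / 2"
      by (intro eventually_ball_finite) auto
    hence ev1: "\<forall>\<^sub>F n in sequentially. psiR m DG H (xs (fs n)) y < - \<eta> / 2"
      by (rule eventually_mono) (intro psiR_lt, auto)
    have "(\<lambda>n. termR DG H (xs (fs n)) (P (fs n)) 0) \<longlonglongrightarrow> termR DG H xb xb 0"
      unfolding termR_def
      by (intro tendsto_diff tendsto_add tendsto_inner DG_tendsto[OF m_pos] Xlim Plim tendsto_const hR_tendsto[OF m_pos] xbD)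
        (auto simp: xsD PT(1))
    hence "\<forall>\<^sub>F n in sequentially. termR DG H (xs (fs n)) (P (fs n)) 0 > - \<eta> / 4"
      using eta by (intro order_tendstoD(1)) (auto simp: termR_def)
    hence ev2: "\<forall>\<^sub>F n in sequentially. psiR m DG H (xs (fs n)) (P (fs n)) > - \<eta> / 4"
    proof (rule eventually_mono)
      fix n assume "termR DG H (xs (fs n)) (P (fs n)) 0 > - \<eta> / 4"
      thus "psiR m DG H (xs (fs n)) (P (fs n)) > - \<eta> / 4"
        using term_le_psiR[OF m_pos, of "xs (fs n)" "P (fs n)"] by linarith
    qed
    have "(\<lambda>n. (xs (fs n) - P (fs n)) \<bullet> (y - P (fs n)) / \<alpha>) \<longlonglongrightarrow> (xb - xb) \<bullet> (y - xb) / \<alpha>"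
      by (intro tendsto_divide tendsto_inner tendsto_diff Xlim Plim tendsto_const) (use par in auto)
    hence ev3: "\<forall>\<^sub>F n in sequentially. (xs (fs n) - P (fs n)) \<bullet> (y - P (fs n)) / \<alpha> > - \<eta> / 4"
      using eta by (intro order_tendstoD(1)) auto
    from ev1 ev2 ev3 have "\<forall>\<^sub>F n in sequentially. False"
    proof eventually_elim
      case (elim n)
      have "psiR m DG H (xs (fs n)) (P (fs n)) + (xs (fs n) - P (fs n)) \<bullet> (y - P (fs n)) / \<alpha> \<le> psiR m DG H (xs (fs n)) y"
        using bspec[OF PT(5)[of "fs n"] yD] .
      thus False using elim by linarith
    qed
    thus False by simp
  qed
  thus ?thesis using conv by blast
qed

end
theorem mainTheorem4:
  fixes m :: nat
    and G :: "nat \<Rightarrow> 'a::euclidean_space \<Rightarrow> real"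
    and DG :: "nat \<Rightarrow> 'a \<Rightarrow> 'a"
    and H :: "nat \<Rightarrow> 'a \<Rightarrow> ereal"
    and \<alpha> \<gamma> \<tau>1 \<tau>2 :: real
    and xs :: "nat \<Rightarrow> 'a"
  assumes m_pos: "0 < m"
    and G_grad: "\<And>j x. j < m \<Longrightarrow> (G j has_derivative (\<lambda>h. DG j x \<bullet> h)) (at x)"
    and G_C1: "\<And>j. j < m \<Longrightarrow> continuous_on UNIV (DG j)"
    and G_convex: "\<And>j. j < m \<Longrightarrow> convex_on UNIV (G j)"
    and H_proper: "\<And>j. j < m \<Longrightarrow> proper_fun (H j)"
    and H_convex: "\<And>j. j < m \<Longrightarrow> ereal_convex (H j)"
    and H_cont: "\<And>j. j < m \<Longrightarrow> continuous_on {x. H j x < \<infinity>} (H j)"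
    and dom_ne: "domF m H \<noteq> {}"
    and dom_closed: "closed (domF m H)"
    and A1: "assumption_A1 m G H"
    and seq: "mpg_sequence m G DG H \<alpha> \<gamma> \<tau>1 \<tau>2 xs"
  shows "\<exists>xb. xs \<longlonglongrightarrow> xb \<and> weakly_pareto m G H xb"
proof -
  have pp: "xs 0 \<in> domF m H" "0 < \<alpha>" "0 < \<gamma>" "\<gamma> < 2 / \<alpha>" "0 < \<tau>1" "\<tau>1 < \<tau>2" "\<tau>2 < 1"
    and steps: "\<forall>k. mpg_step m G DG H \<alpha> \<gamma> \<tau>1 \<tau>2 (xs k) (xs (Suc k))"
    using seq unfolding mpg_sequence_def by auto
  interpret mpgl m G DG H \<alpha> \<gamma> \<tau>1 \<tau>2
    using m_pos G_grad G_C1 G_convex H_proper H_convex H_cont dom_closed pp(2-)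
    by unfold_locales auto
  show ?thesis by (rule main[OF A1 pp(1) steps])
qed

end
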